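(* Let $(\Omega,\mathcal{F})$ be a measurable space, $\mathcal{P}$ a nonempty set of probability measures on it, $\hat{\mathbb{E}}[Z]=\sup_{P\in\mathcal{P}}E_P[Z]$, and let $X=(X_1,\dots,X_n)^T$ be an $n$-dimensional random vector with $\hat{\mathbb{E}}[\|X\|^2]<\infty$, where $\|\cdot\|$ is the Euclidean norm. Let $\mathcal{S}=\{E_P[(X-E_P[X])(X-E_P[X])^T]:P\in\mathrm{co}(\mathcal{P})\}$. Then for every $\Sigma=(c_{ij})_{1\le i,j\le n}\in\mathcal{S}$, $$\underline{C}(X_i,X_j)\le c_{ij}\le\overline{C}(X_i,X_j)\quad\text{for all }1\le i,j\le n.$$
   Context: $\mathrm{co}(\mathcal{P})$ is the convex hull of $\mathcal{P}$. For a random variable $W$ with $\hat{\mathbb{E}}[W^2]<\infty$: $\overline{\mu}_W=\hat{\mathbb{E}}[W]$, $\underline{\mu}_W=-\hat{\mathbb{E}}[-W]$, $M_W=[\underline{\mu}_W,\overline{\mu}_W]$. Upper covariance $\overline{C}(Y,Z)=\max_{\mu_2\in M_Z}\min_{\mu_1\in M_Y}\hat{\mathbb{E}}[(Y-\mu_1)(Z-\mu_2)]$; lower covariance $\underline{C}(Y,Z)=\min_{\mu_2\in M_Z}\max_{\mu_1\in M_Y}\left(-\hat{\mathbb{E}}[-(Y-\mu_1)(Z-\mu_2)]\right)$. *)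

theory Defs
  imports "HOL-Probability.Probability"
begin

definition sub_exp :: "'a measure set \<Rightarrow> ('a \<Rightarrow> real) \<Rightarrow> real" where
  "sub_exp Ps Z = (SUP P\<in>Ps. integral\<^sup>L P Z)"

definition upper_mean :: "'a measure set \<Rightarrow> ('a \<Rightarrow> real) \<Rightarrow> real" where
  "upper_mean Ps W = sub_exp Ps W"

definition lower_mean :: "'a measure set \<Rightarrow> ('a \<Rightarrow> real) \<Rightarrow> real" where
  "lower_mean Ps W = - sub_exp Ps (\<lambda>\<omega>. - W \<omega>)"

definition mean_interval :: "'a measure set \<Rightarrow> ('a \<Rightarrow> real) \<Rightarrow> real set" where
  "mean_interval Ps W = {lower_mean Ps W .. upper_mean Ps W}"

definition upper_cov :: "'a measure set \<Rightarrow> ('a \<Rightarrow> real) \<Rightarrow> ('a \<Rightarrow> real) \<Rightarrow> real" where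
  "upper_cov Ps Y Z = (SUP \<mu>2\<in>mean_interval Ps Z. INF \<mu>1\<in>mean_interval Ps Y.
       sub_exp Ps (\<lambda>\<omega>. (Y \<omega> - \<mu>1) * (Z \<omega> - \<mu>2)))"

definition lower_cov :: "'a measure set \<Rightarrow> ('a \<Rightarrow> real) \<Rightarrow> ('a \<Rightarrow> real) \<Rightarrow> real" where
  "lower_cov Ps Y Z = (INF \<mu>2\<in>mean_interval Ps Z. SUP \<mu>1\<in>mean_interval Ps Y.
       - sub_exp Ps (\<lambda>\<omega>. - ((Y \<omega> - \<mu>1) * (Z \<omega> - \<mu>2))))"

definition measure_co :: "'a measure \<Rightarrow> 'a measure set \<Rightarrow> 'a measure set" where
  "measure_co \<Omega> Ps = {Q. sets Q = sets \<Omega> \<and>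
     (\<exists>(k::nat) (p::nat \<Rightarrow> 'a measure) (w::nat \<Rightarrow> real).
        (\<forall>i<k. p i \<in> Ps \<and> 0 \<le> w i) \<and> (\<Sum>i<k. w i) = 1 \<and>
        (\<forall>A\<in>sets \<Omega>. emeasure Q A = (\<Sum>i<k. ennreal (w i) * emeasure (p i) A)))}"

definition cov_matrix :: "'a measure \<Rightarrow> ('a \<Rightarrow> real ^ 'n) \<Rightarrow> real ^ 'n ^ 'n" where
  "cov_matrix Q X = (\<chi> i j. integral\<^sup>L Q (\<lambda>\<omega>.
      (X \<omega> $ i - integral\<^sup>L Q (\<lambda>\<omega>'. X \<omega>' $ i)) *
      (X \<omega> $ j - integral\<^sup>L Q (\<lambda>\<omega>'. X \<omega>' $ j))))"

definition cov_set :: "'a measure \<Rightarrow> 'a measure set \<Rightarrow> ('a \<Rightarrow> real ^ 'n) \<Rightarrow> (real ^ 'n ^ 'n) set" where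
  "cov_set \<Omega> Ps X = (\<lambda>Q. cov_matrix Q X) ` measure_co \<Omega> Ps"

end

theory Submission
  imports Defs
begin

lemma meas_transfer: "sets M = sets \<Omega> \<Longrightarrow> f \<in> measurable \<Omega> N \<Longrightarrow> f \<in> measurable M N"
  using measurable_cong_sets by blast

lemma mix_nn:
  fixes Q \<Omega> :: "'a measure" and p :: "nat \<Rightarrow> 'a measure"
  assumes sQ: "sets Q = sets \<Omega>" and sp: "\<And>i. i < k \<Longrightarrow> sets (p i) = sets \<Omega>"
    and em: "\<And>A. A \<in> sets \<Omega> \<Longrightarrow> emeasure Q A = (\<Sum>i<k. ennreal (w i) * emeasure (p i) A)"
    and f: "f \<in> borel_measurable \<Omega>"
  shows "(\<integral>\<^sup>+x. f x \<partial>Q) = (\<Sum>i<k. ennreal (w i) * (\<integral>\<^sup>+x. f x \<partial>p i))"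
  using f
proof (induction rule: borel_measurable_induct)
  case (cong f g)
  have spQ: "space Q = space \<Omega>" using sQ sets_eq_imp_space_eq by blast
  have "(\<integral>\<^sup>+x. f x \<partial>Q) = (\<integral>\<^sup>+x. g x \<partial>Q)"
    by (rule nn_integral_cong) (use cong spQ in auto)
  moreover have "\<And>i. i < k \<Longrightarrow> (\<integral>\<^sup>+x. f x \<partial>p i) = (\<integral>\<^sup>+x. g x \<partial>p i)"
    by (rule nn_integral_cong) (use cong sp sets_eq_imp_space_eq in metis)
  ultimately show ?case using cong by simp
next
  case (set A)
  have "A \<in> sets Q" using set sQ by simp
  moreover have "\<And>i. i < k \<Longrightarrow> A \<in> sets (p i)" using set sp by simp
  ultimately show ?case using em[OF set] by simp
next
  case (mult u c)
  have mQ: "u \<in> borel_measurable Q" using mult(2) by (auto intro: meas_transfer[OF sQ])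
  have mp: "\<And>i. i < k \<Longrightarrow> u \<in> borel_measurable (p i)" using mult(2) by (auto intro: meas_transfer[OF sp])
  have "(\<integral>\<^sup>+x. c * u x \<partial>Q) = c * (\<integral>\<^sup>+x. u x \<partial>Q)" using mQ by (simp add: nn_integral_cmult)
  also have "\<dots> = (\<Sum>i<k. ennreal (w i) * (c * (\<integral>\<^sup>+x. u x \<partial>p i)))"
    using mult(4) by (simp add: sum_distrib_left ac_simps)
  also have "\<dots> = (\<Sum>i<k. ennreal (w i) * (\<integral>\<^sup>+x. c * u x \<partial>p i))"
    by (rule sum.cong) (use mp in \<open>auto simp: nn_integral_cmult\<close>)
  finally show ?case .
next
  case (add u v)
  have mQ: "u \<in> borel_measurable Q" "v \<in> borel_measurable Q" using add by (auto intro: meas_transfer[OF sQ])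
  have mp: "\<And>i. i < k \<Longrightarrow> u \<in> borel_measurable (p i) \<and> v \<in> borel_measurable (p i)"
    using add by (auto intro: meas_transfer[OF sp])
  have "(\<integral>\<^sup>+x. v x + u x \<partial>Q) = (\<integral>\<^sup>+x. v x \<partial>Q) + (\<integral>\<^sup>+x. u x \<partial>Q)" using mQ by (simp add: nn_integral_add)
  also have "\<dots> = (\<Sum>i<k. ennreal (w i) * ((\<integral>\<^sup>+x. v x \<partial>p i) + (\<integral>\<^sup>+x. u x \<partial>p i)))"
    using add by (simp add: sum.distrib distrib_left)
  also have "\<dots> = (\<Sum>i<k. ennreal (w i) * (\<integral>\<^sup>+x. v x + u x \<partial>p i))"
    by (rule sum.cong) (use mp in \<open>auto simp: nn_integral_add\<close>)
  finally show ?case .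
next
  case (seq U)
  have mQ: "\<And>n. U n \<in> borel_measurable Q" using seq by (auto intro: meas_transfer[OF sQ])
  have mp: "\<And>i n. i < k \<Longrightarrow> U n \<in> borel_measurable (p i)"
    using seq by (auto intro: meas_transfer[OF sp])
  have "(\<integral>\<^sup>+x. (SUP n. U n) x \<partial>Q) = (SUP n. (\<integral>\<^sup>+x. U n x \<partial>Q))"
    unfolding SUP_apply by (rule nn_integral_monotone_convergence_SUP) (use seq mQ in auto)
  also have "\<dots> = (SUP n. \<Sum>i<k. ennreal (w i) * (\<integral>\<^sup>+x. U n x \<partial>p i))" using seq by simp
  also have "\<dots> = (\<Sum>i<k. SUP n. ennreal (w i) * (\<integral>\<^sup>+x. U n x \<partial>p i))"
  proof (rule ennreal_SUP_sum)
    fix i assume "i \<in> {..<k}"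
    show "incseq (\<lambda>n. ennreal (w i) * (\<integral>\<^sup>+x. U n x \<partial>p i))"
      by (intro monoI mult_left_mono nn_integral_mono) (use seq in \<open>auto simp: incseq_def le_fun_def\<close>)
  qed
  also have "\<dots> = (\<Sum>i<k. ennreal (w i) * (SUP n. (\<integral>\<^sup>+x. U n x \<partial>p i)))"
    by (simp add: SUP_mult_left_ennreal)
  also have "\<dots> = (\<Sum>i<k. ennreal (w i) * (\<integral>\<^sup>+x. (SUP n. U n) x \<partial>p i))"
    unfolding SUP_apply
    by (rule sum.cong[OF refl], subst nn_integral_monotone_convergence_SUP) (use seq mp in auto)
  finally show ?case .
qed
lemma mix_int:
  fixes Q \<Omega> :: "'a measure" and p :: "nat \<Rightarrow> 'a measure" and f :: "'a \<Rightarrow> real"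
  assumes sQ: "sets Q = sets \<Omega>" and sp: "\<And>i. i < k \<Longrightarrow> sets (p i) = sets \<Omega>"
    and w: "\<And>i. i < k \<Longrightarrow> 0 \<le> w i"
    and em: "\<And>A. A \<in> sets \<Omega> \<Longrightarrow> emeasure Q A = (\<Sum>i<k. ennreal (w i) * emeasure (p i) A)"
    and f: "f \<in> borel_measurable \<Omega>"
    and int: "\<And>i. i < k \<Longrightarrow> integrable (p i) f"
  shows "integrable Q f \<and> integral\<^sup>L Q f = (\<Sum>i<k. w i * integral\<^sup>L (p i) f)"
proof -
  have fm[measurable]: "f \<in> borel_measurable \<Omega>" by (rule f)
  have fQ: "f \<in> borel_measurable Q" using f by (rule meas_transfer[OF sQ])
  have fin: "(\<integral>\<^sup>+x. ennreal (g x) \<partial>p i) < \<infinity>" if "i < k" "integrable (p i) g" for i and g :: "'a \<Rightarrow> real"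
    using that unfolding real_integrable_def by (simp add: less_top)
  have fin2: "ennreal (w i) * (\<integral>\<^sup>+x. ennreal (g x) \<partial>p i) < \<infinity>" if "i < k" "integrable (p i) g" for i and g :: "'a \<Rightarrow> real"
    using fin[OF that] by (simp add: ennreal_mult_less_top)
  have nf: "(\<integral>\<^sup>+x. ennreal (norm (f x)) \<partial>Q) = (\<Sum>i<k. ennreal (w i) * (\<integral>\<^sup>+x. ennreal (norm (f x)) \<partial>p i))"
    using f by (intro mix_nn[OF sQ sp em]) simp_all
  have "(\<Sum>i<k. ennreal (w i) * (\<integral>\<^sup>+x. ennreal (norm (f x)) \<partial>p i)) < \<infinity>"
  proof -
    have "\<forall>i\<in>{..<k}. ennreal (w i) * (\<integral>\<^sup>+x. ennreal (norm (f x)) \<partial>p i) < \<top>"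
    proof
      fix i assume i: "i \<in> {..<k}"
      have "integrable (p i) (\<lambda>x. norm (f x))" using int i by auto
      then show "ennreal (w i) * (\<integral>\<^sup>+x. ennreal (norm (f x)) \<partial>p i) < \<top>"
        using fin2 i by simp
    qed
    then show ?thesis by simp
  qed
  then have "(\<integral>\<^sup>+x. ennreal (norm (f x)) \<partial>Q) < \<infinity>" using nf by simp
  then have iQ: "integrable Q f" using fQ integrableI_bounded by blast
  have pos: "(\<integral>\<^sup>+x. ennreal (f x) \<partial>Q) = (\<Sum>i<k. ennreal (w i) * (\<integral>\<^sup>+x. ennreal (f x) \<partial>p i))"
    using f by (intro mix_nn[OF sQ sp em]) simp_all
  have neg: "(\<integral>\<^sup>+x. ennreal (- f x) \<partial>Q) = (\<Sum>i<k. ennreal (w i) * (\<integral>\<^sup>+x. ennreal (- f x) \<partial>p i))"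
    using f by (intro mix_nn[OF sQ sp em]) simp_all
  have e: "enn2real (\<Sum>i<k. ennreal (w i) * (\<integral>\<^sup>+x. ennreal (g x) \<partial>p i)) = (\<Sum>i<k. w i * enn2real (\<integral>\<^sup>+x. ennreal (g x) \<partial>p i))"
    if "\<And>i. i < k \<Longrightarrow> integrable (p i) g" for g :: "'a \<Rightarrow> real"
  proof -
    have "enn2real (\<Sum>i<k. ennreal (w i) * (\<integral>\<^sup>+x. ennreal (g x) \<partial>p i)) = (\<Sum>i<k. enn2real (ennreal (w i) * (\<integral>\<^sup>+x. ennreal (g x) \<partial>p i)))"
      using enn2real_sum[of "{..<k}" "\<lambda>i. ennreal (w i) * (\<integral>\<^sup>+x. ennreal (g x) \<partial>p i)"] fin2 that by simp
    also have "\<dots> = (\<Sum>i<k. w i * enn2real (\<integral>\<^sup>+x. ennreal (g x) \<partial>p i))"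
      by (rule sum.cong[OF refl]) (simp add: enn2real_mult w)
    finally show ?thesis .
  qed
  have "integral\<^sup>L Q f = (\<Sum>i<k. w i * enn2real (\<integral>\<^sup>+x. ennreal (f x) \<partial>p i)) - (\<Sum>i<k. w i * enn2real (\<integral>\<^sup>+x. ennreal (- f x) \<partial>p i))"
    unfolding real_lebesgue_integral_def[OF iQ] pos neg
    using e[of f] e[of "\<lambda>x. - f x"] int by simp
  also have "\<dots> = (\<Sum>i<k. w i * (enn2real (\<integral>\<^sup>+x. ennreal (f x) \<partial>p i) - enn2real (\<integral>\<^sup>+x. ennreal (- f x) \<partial>p i)))"
    by (simp add: sum_subtractf right_diff_distrib)
  also have "\<dots> = (\<Sum>i<k. w i * integral\<^sup>L (p i) f)"
    by (rule sum.cong[OF refl]) (simp add: real_lebesgue_integral_def[OF int])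
  finally show ?thesis using iQ by blast
qed
lemma bound_int:
  fixes P \<Omega> :: "'a measure" and f :: "'a \<Rightarrow> real" and X :: "'a \<Rightarrow> real ^ 'n"
  assumes P: "prob_space P" and sP: "sets P = sets \<Omega>" and X: "X \<in> borel_measurable \<Omega>"
    and K: "(\<integral>\<^sup>+x. ennreal ((norm (X x))\<^sup>2) \<partial>P) \<le> ennreal K" and K0: "0 \<le> K"
    and f: "f \<in> borel_measurable \<Omega>" and b: "0 \<le> b"
    and fb: "\<And>x. x \<in> space \<Omega> \<Longrightarrow> \<bar>f x\<bar> \<le> a + b * (norm (X x))\<^sup>2"
  shows "integrable P f \<and> \<bar>integral\<^sup>L P f\<bar> \<le> a + b * K"
proof -
  interpret prob_space P by (rule P)
  have spP: "space P = space \<Omega>" using sP sets_eq_imp_space_eq by blast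
  have XP: "X \<in> borel_measurable P" using X by (rule meas_transfer[OF sP])
  have fP: "f \<in> borel_measurable P" using f by (rule meas_transfer[OF sP])
  have n2: "(\<lambda>x. (norm (X x))\<^sup>2) \<in> borel_measurable P" using XP by measurable
  have "integrable P (\<lambda>x. (norm (X x))\<^sup>2)"
    by (rule integrableI_nonneg) (use n2 K in \<open>auto simp: ennreal_less_top[of K] intro: le_less_trans\<close>)
  then have ig: "integrable P (\<lambda>x. a + b * (norm (X x))\<^sup>2)" by auto
  have iF: "integrable P f"
    by (rule Bochner_Integration.integrable_bound[OF ig fP]) (use fb spP in \<open>auto intro!: AE_I2 order.trans[OF _ abs_ge_self]\<close>)
  have "\<bar>integral\<^sup>L P f\<bar> \<le> integral\<^sup>L P (\<lambda>x. \<bar>f x\<bar>)" by (rule integral_abs_bound)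
  also have "\<dots> \<le> integral\<^sup>L P (\<lambda>x. a + b * (norm (X x))\<^sup>2)"
    by (rule integral_mono) (use iF ig fb spP in auto)
  also have "\<dots> = a + b * integral\<^sup>L P (\<lambda>x. (norm (X x))\<^sup>2)"
    using \<open>integrable P (\<lambda>x. (norm (X x))\<^sup>2)\<close> by (simp add: prob_space.prob_space[OF P])
  also have "integral\<^sup>L P (\<lambda>x. (norm (X x))\<^sup>2) \<le> K"
  proof -
    have "integral\<^sup>L P (\<lambda>x. (norm (X x))\<^sup>2) = enn2real (\<integral>\<^sup>+x. ennreal ((norm (X x))\<^sup>2) \<partial>P)"
      by (rule integral_eq_nn_integral) (use n2 in auto)
    also have "\<dots> \<le> enn2real (ennreal K)" by (rule enn2real_mono[OF K]) simp
    finally show ?thesis using K0 by simp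
  qed
  then have "a + b * integral\<^sup>L P (\<lambda>x. (norm (X x))\<^sup>2) \<le> a + b * K" using b by (simp add: mult_left_mono)
  finally show ?thesis using iF by blast
qed

lemma prodb: fixes a b u v n R :: real
  assumes "\<bar>a\<bar> \<le> n" "\<bar>b\<bar> \<le> n" "\<bar>u\<bar> \<le> R" "\<bar>v\<bar> \<le> R"
  shows "\<bar>(a - u) * (b - v)\<bar> \<le> 2 * R\<^sup>2 + 2 * n\<^sup>2"
proof -
  have "\<bar>(a - u) * (b - v)\<bar> = \<bar>a - u\<bar> * \<bar>b - v\<bar>" by (simp add: abs_mult)
  also have "\<dots> \<le> (n + R) * (n + R)" using assms by (intro mult_mono) auto
  also have "\<dots> \<le> 2 * R\<^sup>2 + 2 * n\<^sup>2" using zero_le_power2[of "n - R"] by (simp add: power2_eq_square algebra_simps)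
  finally show ?thesis .
qed

lemma compb: "\<bar>(x::real^'n) $ i\<bar> \<le> 1 + 1 * (norm x)\<^sup>2"
proof -
  have "0 \<le> (norm x - 1)\<^sup>2" by simp
  then have h: "2 * norm x \<le> 1 + (norm x)\<^sup>2" by (simp add: power2_eq_square algebra_simps)
  have "norm x \<le> 1 + (norm x)\<^sup>2" using h norm_ge_zero[of x] by linarith
  then show ?thesis using component_le_norm_cart[of x i] by simp
qed

lemma sub_exp_bounds:
  fixes Ps :: "'a measure set" and g :: "'a \<Rightarrow> real"
  assumes ne: "Ps \<noteq> {}" and b: "\<And>P. P \<in> Ps \<Longrightarrow> \<bar>integral\<^sup>L P g\<bar> \<le> C"
  shows "(\<forall>P\<in>Ps. integral\<^sup>L P g \<le> sub_exp Ps g) \<and> \<bar>sub_exp Ps g\<bar> \<le> C"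
proof -
  have bdd: "bdd_above ((\<lambda>P. integral\<^sup>L P g) ` Ps)"
    by (rule bdd_aboveI[of _ C]) (use b in force)
  have up: "\<forall>P\<in>Ps. integral\<^sup>L P g \<le> sub_exp Ps g"
    unfolding sub_exp_def using bdd by (auto intro: cSUP_upper)
  have le: "sub_exp Ps g \<le> C"
    unfolding sub_exp_def using ne b by (auto intro!: cSUP_least simp: abs_le_iff)
  obtain P0 where P0: "P0 \<in> Ps" using ne by blast
  have "- C \<le> integral\<^sup>L P0 g" using b[OF P0] by simp
  also have "\<dots> \<le> sub_exp Ps g" using up P0 by blast
  finally show ?thesis using up le by auto
qed

lemma mix_le:
  fixes w a :: "nat \<Rightarrow> real"
  assumes "\<And>i. i < k \<Longrightarrow> 0 \<le> w i" "(\<Sum>i<k. w i) = 1" "\<And>i. i < k \<Longrightarrow> a i \<le> s"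
  shows "(\<Sum>i<k. w i * a i) \<le> s"
proof -
  have "(\<Sum>i<k. w i * a i) \<le> (\<Sum>i<k. w i * s)"
    by (rule sum_mono) (use assms in \<open>auto intro: mult_left_mono\<close>)
  also have "\<dots> = s" using assms(2) by (simp add: sum_distrib_right[symmetric])
  finally show ?thesis .
qed

theorem proposition4p8:
  fixes \<Omega> :: "'a measure" and Ps :: "'a measure set" and X :: "'a \<Rightarrow> real ^ 'n"
  assumes "Ps \<noteq> {}"
    and "\<And>P. P \<in> Ps \<Longrightarrow> prob_space P \<and> sets P = sets \<Omega>"
    and "X \<in> borel_measurable \<Omega>"
    and "(SUP P\<in>Ps. \<integral>\<^sup>+ \<omega>. ennreal ((norm (X \<omega>))\<^sup>2) \<partial>P) < \<infinity>"
    and "\<Sigma> \<in> cov_set \<Omega> Ps X"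
  shows "\<forall>i j. lower_cov Ps (\<lambda>\<omega>. X \<omega> $ i) (\<lambda>\<omega>. X \<omega> $ j) \<le> \<Sigma> $ i $ j \<and>
               \<Sigma> $ i $ j \<le> upper_cov Ps (\<lambda>\<omega>. X \<omega> $ i) (\<lambda>\<omega>. X \<omega> $ j)"
proof (intro allI)
  fix i j
  define Y where "Y = (\<lambda>\<omega>. X \<omega> $ i)"
  define Z where "Z = (\<lambda>\<omega>. X \<omega> $ j)"
  from assms(5) obtain Q where QC: "Q \<in> measure_co \<Omega> Ps" and SQ: "\<Sigma> = cov_matrix Q X"
    unfolding cov_set_def by auto
  from QC have QC': "sets Q = sets \<Omega> \<and> (\<exists>(k::nat) (p::nat \<Rightarrow> 'a measure) (w::nat \<Rightarrow> real).
        (\<forall>i<k. p i \<in> Ps \<and> 0 \<le> w i) \<and> (\<Sum>i<k. w i) = 1 \<and>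
        (\<forall>A\<in>sets \<Omega>. emeasure Q A = (\<Sum>i<k. ennreal (w i) * emeasure (p i) A)))"
    unfolding measure_co_def by simp
  from QC' obtain k :: nat and p :: "nat \<Rightarrow> 'a measure" and w :: "nat \<Rightarrow> real" where sQ: "sets Q = sets \<Omega>" and pw: "\<forall>i<k. p i \<in> Ps \<and> 0 \<le> w i"
    and ws: "(\<Sum>i<k. w i) = 1"
    and em: "\<forall>A\<in>sets \<Omega>. emeasure Q A = (\<Sum>i<k. ennreal (w i) * emeasure (p i) A)"
    by blast
  have pPs: "\<And>i. i < k \<Longrightarrow> p i \<in> Ps" and w0: "\<And>i. i < k \<Longrightarrow> 0 \<le> w i" using pw by auto
  have sp: "\<And>i. i < k \<Longrightarrow> sets (p i) = sets \<Omega>" using pPs assms(2) by blast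
  have em': "\<And>A. A \<in> sets \<Omega> \<Longrightarrow> emeasure Q A = (\<Sum>i<k. ennreal (w i) * emeasure (p i) A)"
    using em by blast
  define B where "B = (SUP P\<in>Ps. \<integral>\<^sup>+ \<omega>. ennreal ((norm (X \<omega>))\<^sup>2) \<partial>P)"
  define K where "K = enn2real B"
  have K0: "0 \<le> K" by (simp add: K_def)
  have "B < top" using assms(4) by (simp add: B_def)
  then have BK: "B = ennreal K" by (simp add: K_def)
  have PK: "\<And>P. P \<in> Ps \<Longrightarrow> (\<integral>\<^sup>+ \<omega>. ennreal ((norm (X \<omega>))\<^sup>2) \<partial>P) \<le> ennreal K"
    unfolding BK[symmetric] B_def by (rule SUP_upper)
  have spQ: "space Q = space \<Omega>" using sQ sets_eq_imp_space_eq by blast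
  have Qprob: "prob_space Q"
  proof (rule prob_spaceI)
    have "emeasure Q (space Q) = (\<Sum>i<k. ennreal (w i) * emeasure (p i) (space \<Omega>))"
      unfolding spQ by (rule em') simp
    also have "\<dots> = (\<Sum>i<k. ennreal (w i))"
    proof (rule sum.cong[OF refl])
      fix l assume "l \<in> {..<k}"
      then have "prob_space (p l)" "space (p l) = space \<Omega>"
        using pPs assms(2) sp[of l] sets_eq_imp_space_eq[of "p l" \<Omega>] by auto
      then show "ennreal (w l) * emeasure (p l) (space \<Omega>) = ennreal (w l)"
        using prob_space.emeasure_space_1 by fastforce
    qed
    also have "\<dots> = ennreal (\<Sum>i<k. w i)" by (rule sum_ennreal) (use w0 in simp)
    finally show "emeasure Q (space Q) = 1" using ws by simp
  qed
  have key: "integrable Q f \<and> \<bar>sub_exp Ps f\<bar> \<le> a + b * K \<and> \<bar>sub_exp Ps (\<lambda>x. - f x)\<bar> \<le> a + b * K \<and>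
      integral\<^sup>L Q f \<le> sub_exp Ps f \<and> - sub_exp Ps (\<lambda>x. - f x) \<le> integral\<^sup>L Q f"
    if f: "f \<in> borel_measurable \<Omega>" and b: "0 \<le> b"
      and fb: "\<And>x. x \<in> space \<Omega> \<Longrightarrow> \<bar>f x\<bar> \<le> a + b * (norm (X x))\<^sup>2" for f a b
  proof -
    have hP: "integrable P f \<and> \<bar>integral\<^sup>L P f\<bar> \<le> a + b * K" if "P \<in> Ps" for P
      using bound_int[of P \<Omega> X K f b a] assms(2)[OF that] assms(3) PK[OF that] K0 f b fb by blast
    have fm: "(\<lambda>x. - f x) \<in> borel_measurable \<Omega>" using f by simp
    have hPm: "integrable P (\<lambda>x. - f x) \<and> \<bar>integral\<^sup>L P (\<lambda>x. - f x)\<bar> \<le> a + b * K" if "P \<in> Ps" for P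
      using bound_int[of P \<Omega> X K "\<lambda>x. - f x" b a] assms(2)[OF that] assms(3) PK[OF that] K0 fm b fb by simp
    have s1: "(\<forall>P\<in>Ps. integral\<^sup>L P f \<le> sub_exp Ps f) \<and> \<bar>sub_exp Ps f\<bar> \<le> a + b * K"
      by (rule sub_exp_bounds[OF assms(1)]) (use hP in blast)
    have s2: "(\<forall>P\<in>Ps. integral\<^sup>L P (\<lambda>x. - f x) \<le> sub_exp Ps (\<lambda>x. - f x)) \<and> \<bar>sub_exp Ps (\<lambda>x. - f x)\<bar> \<le> a + b * K"
      by (rule sub_exp_bounds[OF assms(1)]) (use hPm in blast)
    have dbg: "\<And>l. l < k \<Longrightarrow> integrable (p l) f" using hP pPs by blast
    have dbg2: "\<And>l. l < k \<Longrightarrow> integrable (p l) (\<lambda>x. - f x)" using hPm pPs by blast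
    have m1: "integrable Q f \<and> integral\<^sup>L Q f = (\<Sum>i<k. w i * integral\<^sup>L (p i) f)"
      by (rule mix_int[OF sQ sp w0 em' f dbg])
    have m2: "integrable Q (\<lambda>x. - f x) \<and> integral\<^sup>L Q (\<lambda>x. - f x) = (\<Sum>i<k. w i * integral\<^sup>L (p i) (\<lambda>x. - f x))"
      by (rule mix_int[OF sQ sp w0 em' fm dbg2])
    have "integral\<^sup>L Q f \<le> sub_exp Ps f"
    proof -
      have h: "\<And>l. l < k \<Longrightarrow> integral\<^sup>L (p l) f \<le> sub_exp Ps f" using s1 pPs by blast
      show ?thesis unfolding m1[THEN conjunct2]
        by (rule mix_le[where a="\<lambda>l. integral\<^sup>L (p l) f"]) (use w0 ws h in auto)
    qed
    moreover have "integral\<^sup>L Q (\<lambda>x. - f x) \<le> sub_exp Ps (\<lambda>x. - f x)"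
    proof -
      have h: "\<And>l. l < k \<Longrightarrow> integral\<^sup>L (p l) (\<lambda>x. - f x) \<le> sub_exp Ps (\<lambda>x. - f x)" using s2 pPs by blast
      show ?thesis unfolding m2[THEN conjunct2]
        by (rule mix_le[where a="\<lambda>l. integral\<^sup>L (p l) (\<lambda>x. - f x)"]) (use w0 ws h in auto)
    qed
    ultimately show ?thesis using m1 s1 s2 by simp
  qed
  have Ym: "Y \<in> borel_measurable \<Omega>" unfolding Y_def by (rule measurable_compose[OF assms(3) borel_measurable_nth])
  have Zm: "Z \<in> borel_measurable \<Omega>" unfolding Z_def by (rule measurable_compose[OF assms(3) borel_measurable_nth])
  have Yb: "\<And>x. x \<in> space \<Omega> \<Longrightarrow> \<bar>Y x\<bar> \<le> 1 + 1 * (norm (X x))\<^sup>2" unfolding Y_def by (rule compb)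
  have Zb: "\<And>x. x \<in> space \<Omega> \<Longrightarrow> \<bar>Z x\<bar> \<le> 1 + 1 * (norm (X x))\<^sup>2" unfolding Z_def by (rule compb)
  note kY = key[OF Ym _ Yb, simplified]
  note kZ = key[OF Zm _ Zb, simplified]
  define R where "R = 1 + K"
  define mY where "mY = integral\<^sup>L Q Y"
  define mZ where "mZ = integral\<^sup>L Q Z"
  define MY where "MY = mean_interval Ps Y"
  define MZ where "MZ = mean_interval Ps Z"
  have mYM: "mY \<in> MY" using kY unfolding mY_def MY_def mean_interval_def lower_mean_def upper_mean_def by auto
  have mZM: "mZ \<in> MZ" using kZ unfolding mZ_def MZ_def mean_interval_def lower_mean_def upper_mean_def by auto
  have MYR: "\<And>u. u \<in> MY \<Longrightarrow> \<bar>u\<bar> \<le> R"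
    using kY unfolding MY_def R_def mean_interval_def lower_mean_def upper_mean_def by (auto simp: abs_le_iff)
  have MZR: "\<And>u. u \<in> MZ \<Longrightarrow> \<bar>u\<bar> \<le> R"
    using kZ unfolding MZ_def R_def mean_interval_def lower_mean_def upper_mean_def by (auto simp: abs_le_iff)
  have nX: "\<And>x l. \<bar>X x $ l\<bar> \<le> norm (X x)" by (rule component_le_norm_cart)
  define C where "C = 2 * R\<^sup>2 + 2 * K"
  have kP: "integrable Q (\<lambda>x. (Y x - u) * (Z x - v)) \<and>
      \<bar>sub_exp Ps (\<lambda>x. (Y x - u) * (Z x - v))\<bar> \<le> C \<and>
      \<bar>sub_exp Ps (\<lambda>x. - ((Y x - u) * (Z x - v)))\<bar> \<le> C \<and>
      integral\<^sup>L Q (\<lambda>x. (Y x - u) * (Z x - v)) \<le> sub_exp Ps (\<lambda>x. (Y x - u) * (Z x - v)) \<and>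
      - sub_exp Ps (\<lambda>x. - ((Y x - u) * (Z x - v))) \<le> integral\<^sup>L Q (\<lambda>x. (Y x - u) * (Z x - v))"
    if "\<bar>u\<bar> \<le> R" "\<bar>v\<bar> \<le> R" for u v
  proof -
    have m: "(\<lambda>x. (Y x - u) * (Z x - v)) \<in> borel_measurable \<Omega>" using Ym Zm by simp
    have "\<And>x. x \<in> space \<Omega> \<Longrightarrow> \<bar>(Y x - u) * (Z x - v)\<bar> \<le> 2 * R\<^sup>2 + 2 * (norm (X x))\<^sup>2"
      unfolding Y_def Z_def by (rule prodb) (use nX that in auto)
    from key[OF m _ this] show ?thesis unfolding C_def by simp
  qed
  have c_eq: "\<Sigma> $ i $ j = integral\<^sup>L Q (\<lambda>x. (Y x - mY) * (Z x - mZ))"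
    unfolding SQ cov_matrix_def Y_def Z_def mY_def mZ_def by simp
  have shift: "integral\<^sup>L Q (\<lambda>x. (Y x - u) * (Z x - mZ)) = \<Sigma> $ i $ j" for u
  proof -
    have iZ: "integrable Q Z" using kZ by blast
    have i1: "integrable Q (\<lambda>x. (Y x - mY) * (Z x - mZ))" using kP[OF MYR[OF mYM] MZR[OF mZM]] by blast
    have i2: "integrable Q (\<lambda>x. (mY - u) * (Z x - mZ))" using iZ Qprob
      by (intro integrable_mult_right Bochner_Integration.integrable_diff) (auto simp: prob_space.finite_measure finite_measure.integrable_const)
    have "integral\<^sup>L Q (\<lambda>x. (Y x - u) * (Z x - mZ)) =
        integral\<^sup>L Q (\<lambda>x. (Y x - mY) * (Z x - mZ) + (mY - u) * (Z x - mZ))"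
      by (rule Bochner_Integration.integral_cong) (auto simp: algebra_simps)
    also have "\<dots> = integral\<^sup>L Q (\<lambda>x. (Y x - mY) * (Z x - mZ)) + integral\<^sup>L Q (\<lambda>x. (mY - u) * (Z x - mZ))"
      by (rule Bochner_Integration.integral_add[OF i1 i2])
    also have "integral\<^sup>L Q (\<lambda>x. (mY - u) * (Z x - mZ)) = (mY - u) * (integral\<^sup>L Q Z - mZ)"
      using iZ Qprob by (simp add: prob_space.prob_space Bochner_Integration.integral_diff prob_space.finite_measure finite_measure.integrable_const)
    also have "\<dots> = 0" by (simp add: mZ_def)
    finally show ?thesis using c_eq by simp
  qed
  define g where "g = (\<lambda>u v. sub_exp Ps (\<lambda>x. (Y x - u) * (Z x - v)))"
  define h where "h = (\<lambda>u v. - sub_exp Ps (\<lambda>x. - ((Y x - u) * (Z x - v))))"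
  have gb: "\<And>u v. u \<in> MY \<Longrightarrow> v \<in> MZ \<Longrightarrow> \<bar>g u v\<bar> \<le> C" using kP MYR MZR unfolding g_def by blast
  have hb: "\<And>u v. u \<in> MY \<Longrightarrow> v \<in> MZ \<Longrightarrow> \<bar>h u v\<bar> \<le> C" using kP MYR MZR unfolding h_def by auto
  have MYne: "MY \<noteq> {}" using mYM by blast
  have up: "\<Sigma> $ i $ j \<le> (SUP v\<in>MZ. INF u\<in>MY. g u v)"
  proof -
    have "\<Sigma> $ i $ j \<le> (INF u\<in>MY. g u mZ)"
    proof (rule cINF_greatest[OF MYne])
      fix u assume "u \<in> MY"
      then show "\<Sigma> $ i $ j \<le> g u mZ" using kP[OF MYR MZR[OF mZM], of u] shift[of u] unfolding g_def by simp
    qed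
    also have "\<dots> \<le> (SUP v\<in>MZ. INF u\<in>MY. g u v)"
    proof (rule cSUP_upper[OF mZM])
      show "bdd_above ((\<lambda>v. INF u\<in>MY. g u v) ` MZ)"
      proof (rule bdd_aboveI[of _ C], clarify)
        fix v assume v: "v \<in> MZ"
        have "(INF u\<in>MY. g u v) \<le> g mY v"
          by (rule cINF_lower[OF _ mYM], rule bdd_belowI[of _ "- C"]) (use gb v in \<open>force simp: abs_le_iff\<close>)
        also have "\<dots> \<le> C" using gb[OF mYM v] by simp
        finally show "(INF u\<in>MY. g u v) \<le> C" .
      qed
    qed
    finally show ?thesis .
  qed
  have lo: "(INF v\<in>MZ. SUP u\<in>MY. h u v) \<le> \<Sigma> $ i $ j"
  proof -
    have "(INF v\<in>MZ. SUP u\<in>MY. h u v) \<le> (SUP u\<in>MY. h u mZ)"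
    proof (rule cINF_lower[OF _ mZM])
      show "bdd_below ((\<lambda>v. SUP u\<in>MY. h u v) ` MZ)"
      proof (rule bdd_belowI[of _ "- C"], clarify)
        fix v assume v: "v \<in> MZ"
        have "- C \<le> h mY v" using hb[OF mYM v] by simp
        also have "\<dots> \<le> (SUP u\<in>MY. h u v)"
          by (rule cSUP_upper[OF mYM], rule bdd_aboveI[of _ C]) (use hb v in \<open>force simp: abs_le_iff\<close>)
        finally show "- C \<le> (SUP u\<in>MY. h u v)" .
      qed
    qed
    also have "\<dots> \<le> \<Sigma> $ i $ j"
    proof (rule cSUP_least[OF MYne])
      fix u assume "u \<in> MY"
      then show "h u mZ \<le> \<Sigma> $ i $ j" using kP[OF MYR MZR[OF mZM], of u] shift[of u] unfolding h_def by simp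
    qed
    finally show ?thesis .
  qed
  have "upper_cov Ps Y Z = (SUP v\<in>MZ. INF u\<in>MY. g u v)"
    unfolding upper_cov_def MY_def MZ_def g_def ..
  moreover have "lower_cov Ps Y Z = (INF v\<in>MZ. SUP u\<in>MY. h u v)"
    unfolding lower_cov_def MY_def MZ_def h_def ..
  ultimately show "lower_cov Ps (\<lambda>\<omega>. X \<omega> $ i) (\<lambda>\<omega>. X \<omega> $ j) \<le> \<Sigma> $ i $ j \<and>
               \<Sigma> $ i $ j \<le> upper_cov Ps (\<lambda>\<omega>. X \<omega> $ i) (\<lambda>\<omega>. X \<omega> $ j)"
    using up lo unfolding Y_def Z_def by simp
qed

end
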